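(* Let $M=B\circ S$ where $S$ is Poisson subsampling with rate $r\in[0,1]$ and $B$ is any base mechanism, and let the batch relation be insertion/removal $\simeq_{\pm}$ with induced distance $d_{\mathbb Y}$. Then for all $x\simeq_{K_+,K_-}x'$, $$\Psi_\alpha(m_x\|m_{x'})\le\max_{\mathbf y}\Psi_\alpha\Big(\sum_{i=1}^{K_-+1}b_{y^{(1)}_i}\,\mathrm{Binom}(i-1\mid K_-,r)\ \Big\|\ \sum_{j=1}^{K_++1}b_{y^{(2)}_j}\,\mathrm{Binom}(j-1\mid K_+,r)\Big),$$ where the maximum is over $\mathbf y=(\mathbf y^{(1)},\mathbf y^{(2)})\in\mathbb Y^{K_-+1}\times\mathbb Y^{K_++1}$ subject to $d_{\mathbb Y}(y^{(l)}_t,y^{(l)}_u)\le|t-u|$ for $l\in\{1,2\}$ and all $t,u$, and $d_{\mathbb Y}(y^{(1)}_t,y^{(2)}_u)\le(t-1)+(u-1)$ for all $t,u$.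
   Context: Finite set $\mathbb A$, datasets $x\subseteq\mathbb A$, batches are subsets $y\subseteq x$. Poisson subsampling with rate $r$ has pmf $s_x(y)=r^{|y|}(1-r)^{|x|-|y|}$ for $y\subseteq x$. Base mechanism $B$: each batch $y$ has density $b_y$ on $\mathbb R^D$; $m_x(z)=\sum_y b_y(z)s_x(y)$. Insertion/removal: $y\simeq_\pm y'$ iff $y'=y\cup\{a\}$ for some $a\notin y$ or $y'=y\setminus\{a\}$ for some $a\in y$; $d_{\mathbb Y}$ is the induced distance (length of shortest chain of neighbors). Datasets $x\simeq_{K_+,K_-}x'$ iff $x'=(x\setminus g_-)\cup g_+$ for some $g_-\subseteq x$ with $|g_-|=K_-$ and $g_+$ disjoint from $x$ with $|g_+|=K_+$. $\mathrm{Binom}(k\mid n,r)=\binom nk r^k(1-r)^{n-k}$. $H_\alpha(p\|q)=\int\max\{p-\alpha q,0\}$ ($\alpha\ge0$), $\Lambda_\alpha(p\|q)=\int p^\alpha q^{1-\alpha}$ ($\alpha>1$); $\Psi_\alpha$ is either. *)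

theory Defs
  imports "HOL-Analysis.Analysis"
begin

text \<open>Ground set A is a finite type 'a; datasets and batches are sets of type 'a set;
  the batch space Y is UNIV :: 'a set set. Outputs live in 'b :: euclidean_space (R^D).\<close>

definition poisson_pmf :: "real \<Rightarrow> 'a set \<Rightarrow> 'a set \<Rightarrow> real" where
  "poisson_pmf r x y = (if y \<subseteq> x then r ^ card y * (1 - r) ^ (card x - card y) else 0)"

definition mixture_density ::
  "('a set \<Rightarrow> 'b \<Rightarrow> real) \<Rightarrow> real \<Rightarrow> 'a set \<Rightarrow> 'b \<Rightarrow> real" where
  "mixture_density b r x z = (\<Sum>y\<in>Pow x. b y z * poisson_pmf r x y)"

definition ins_rem_nbr :: "'a set \<Rightarrow> 'a set \<Rightarrow> bool" where
  "ins_rem_nbr y y' \<longleftrightarrow> (\<exists>a. a \<notin> y \<and> y' = insert a y) \<or> (\<exists>a. a \<in> y \<and> y' = y - {a})"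

definition dist_Y :: "'a set \<Rightarrow> 'a set \<Rightarrow> nat" where
  "dist_Y y y' = (LEAST n. (ins_rem_nbr ^^ n) y y')"

definition dataset_nbr :: "nat \<Rightarrow> nat \<Rightarrow> 'a set \<Rightarrow> 'a set \<Rightarrow> bool" where
  "dataset_nbr Kp Km x x' \<longleftrightarrow>
     (\<exists>gm gp. gm \<subseteq> x \<and> card gm = Km \<and> gp \<inter> x = {} \<and> card gp = Kp \<and> x' = (x - gm) \<union> gp)"

definition binom_pmf :: "nat \<Rightarrow> nat \<Rightarrow> real \<Rightarrow> real" where
  "binom_pmf k n r = real (n choose k) * r ^ k * (1 - r) ^ (n - k)"

definition hockey_stick :: "real \<Rightarrow> ('b::euclidean_space \<Rightarrow> real) \<Rightarrow> ('b \<Rightarrow> real) \<Rightarrow> ennreal" where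
  "hockey_stick \<alpha> p q = (\<integral>\<^sup>+ z. ennreal (max (p z - \<alpha> * q z) 0) \<partial>lborel)"

definition renyi_integrand :: "real \<Rightarrow> real \<Rightarrow> real \<Rightarrow> ennreal" where
  "renyi_integrand \<alpha> p q =
     (if q = 0 then (if p = 0 then 0 else \<infinity>) else ennreal (p powr \<alpha> * q powr (1 - \<alpha>)))"

definition renyi_moment :: "real \<Rightarrow> ('b::euclidean_space \<Rightarrow> real) \<Rightarrow> ('b \<Rightarrow> real) \<Rightarrow> ennreal" where
  "renyi_moment \<alpha> p q = (\<integral>\<^sup>+ z. renyi_integrand \<alpha> (p z) (q z) \<partial>lborel)"

end

theory Submission
  imports Defs "HOL-Combinatorics.Multiset_Permutations"
begin


lemma poisson_union:
  assumes "finite A" "finite B" "A \<inter> B = {}" "w \<subseteq> A" "u \<subseteq> B"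
  shows "poisson_pmf r (A \<union> B) (w \<union> u) = poisson_pmf r A w * poisson_pmf r B u"
proof -
  have fw: "finite w" "finite u" using assms by (meson finite_subset)+
  have cu: "card (w \<union> u) = card w + card u"
    using assms fw by (intro card_Un_disjoint) auto
  have cAB: "card (A \<union> B) = card A + card B"
    using assms by (intro card_Un_disjoint) auto
  have "card w \<le> card A" "card u \<le> card B" using assms by (meson card_mono)+
  then have df: "card (A \<union> B) - (card w + card u) = (card A - card w) + (card B - card u)"
    using cu cAB by simp
  have s: "w \<union> u \<subseteq> A \<union> B" using assms by auto
  show ?thesis unfolding poisson_pmf_def using s assms(4,5)
    by (simp only: if_True cu df power_add mult_ac)
qed

lemma mix_split:
  assumes "finite A" "finite B" "A \<inter> B = {}"
  shows "(\<Sum>y\<in>Pow (A \<union> B). f y * poisson_pmf r (A \<union> B) y) =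
         (\<Sum>w\<in>Pow A. poisson_pmf r A w * (\<Sum>u\<in>Pow B. poisson_pmf r B u * f (w \<union> u)))"
proof -
  have img: "Pow (A \<union> B) = (\<lambda>(w,u). w \<union> u) ` (Pow A \<times> Pow B)"
  proof (rule set_eqI, rule iffI)
    fix y assume "y \<in> Pow (A \<union> B)"
    then have "y = (y \<inter> A) \<union> (y \<inter> B)" "(y \<inter> A, y \<inter> B) \<in> Pow A \<times> Pow B" by auto
    then show "y \<in> (\<lambda>(w,u). w \<union> u) ` (Pow A \<times> Pow B)" by (metis (no_types, lifting) case_prod_conv image_eqI)
  qed auto
  have inj: "inj_on (\<lambda>(w,u). w \<union> u) (Pow A \<times> Pow B)"
  proof (rule inj_onI, clarsimp)
    fix w u w' u' assume h: "w \<subseteq> A" "u \<subseteq> B" "w' \<subseteq> A" "u' \<subseteq> B" "w \<union> u = w' \<union> u'"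
    then have "w = (w \<union> u) \<inter> A" "w' = (w' \<union> u') \<inter> A" "u = (w \<union> u) \<inter> B" "u' = (w' \<union> u') \<inter> B"
      using assms(3) by auto
    then show "w = w' \<and> u = u'" using h(5) by metis
  qed
  have "(\<Sum>y\<in>Pow (A \<union> B). f y * poisson_pmf r (A \<union> B) y) =
        (\<Sum>(w,u)\<in>Pow A \<times> Pow B. f (w \<union> u) * poisson_pmf r (A \<union> B) (w \<union> u))"
    unfolding img by (subst sum.reindex[OF inj]) (simp add: case_prod_unfold)
  also have "\<dots> = (\<Sum>(w,u)\<in>Pow A \<times> Pow B. poisson_pmf r A w * (poisson_pmf r B u * f (w \<union> u)))"
    using assms by (intro sum.cong refl) (auto simp: poisson_union)
  also have "\<dots> = (\<Sum>w\<in>Pow A. poisson_pmf r A w * (\<Sum>u\<in>Pow B. poisson_pmf r B u * f (w \<union> u)))"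
    by (subst sum.cartesian_product[symmetric]) (simp add: sum_distrib_left)
  finally show ?thesis .
qed

lemma poisson_sum1:
  assumes "finite A"
  shows "(\<Sum>w\<in>Pow A. poisson_pmf r A w) = 1"
  using assms
proof (induction A rule: finite_induct)
  case empty
  show ?case by (simp add: poisson_pmf_def)
next
  case (insert a A)
  have e: "insert a A = A \<union> {a}" by auto
  have P: "Pow {a} = {{}, {a}}" by auto
  have one: "(\<Sum>u\<in>Pow {a}. poisson_pmf r {a} u * 1) = 1"
  proof -
    have "(\<Sum>u\<in>Pow {a}. poisson_pmf r {a} u * 1) = poisson_pmf r {a} {} + poisson_pmf r {a} {a}"
      unfolding P by simp
    also have "\<dots> = 1" by (simp add: poisson_pmf_def)
    finally show ?thesis .
  qed
  have "(\<Sum>w\<in>Pow (A \<union> {a}). (\<lambda>_. 1) w * poisson_pmf r (A \<union> {a}) w)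
      = (\<Sum>w\<in>Pow A. poisson_pmf r A w * (\<Sum>u\<in>Pow {a}. poisson_pmf r {a} u * (\<lambda>_. 1) (w \<union> u)))"
    by (rule mix_split) (use insert.hyps in auto)
  then have "(\<Sum>w\<in>Pow (A \<union> {a}). poisson_pmf r (A \<union> {a}) w) = (\<Sum>w\<in>Pow A. poisson_pmf r A w)"
    using one by simp
  then show ?case using insert.IH by (simp add: e[symmetric])
qed

lemma card_perm_prefix:
  assumes "finite G" "u \<subseteq> G" "card u = k"
  shows "card {xs \<in> permutations_of_set G. set (take k xs) = u} = fact k * fact (card G - k)"
proof -
  have fu: "finite u" using assms finite_subset by auto
  have img: "{xs \<in> permutations_of_set G. set (take k xs) = u} =
     (\<lambda>(ys,zs). ys @ zs) ` (permutations_of_set u \<times> permutations_of_set (G - u))"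
  proof (rule set_eqI, rule iffI)
    fix xs assume "xs \<in> {xs \<in> permutations_of_set G. set (take k xs) = u}"
    then have xs: "set xs = G" "distinct xs" "set (take k xs) = u"
      by (auto simp: permutations_of_set_def)
    have dt: "distinct (take k xs)" "distinct (drop k xs)" using xs by auto
    have disj: "set (take k xs) \<inter> set (drop k xs) = {}"
      using xs(2) by (metis append_take_drop_id distinct_append)
    have un: "set (take k xs) \<union> set (drop k xs) = G"
      using xs(1) by (metis append_take_drop_id set_append)
    have "set (drop k xs) = G - u" using disj un xs(3) by auto
    then have "(take k xs, drop k xs) \<in> permutations_of_set u \<times> permutations_of_set (G - u)"
      using dt xs by (auto simp: permutations_of_set_def)
    then show "xs \<in> (\<lambda>(ys,zs). ys @ zs) ` (permutations_of_set u \<times> permutations_of_set (G - u))"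
      by (metis (no_types, lifting) append_take_drop_id case_prod_conv image_eqI)
  next
    fix xs assume "xs \<in> (\<lambda>(ys,zs). ys @ zs) ` (permutations_of_set u \<times> permutations_of_set (G - u))"
    then obtain ys zs where h: "xs = ys @ zs" "set ys = u" "distinct ys" "set zs = G - u" "distinct zs"
      by (auto simp: permutations_of_set_def)
    have "length ys = k" using h assms(3) distinct_card by metis
    then show "xs \<in> {xs \<in> permutations_of_set G. set (take k xs) = u}"
      using h assms(2) by (auto simp: permutations_of_set_def)
  qed
  have inj: "inj_on (\<lambda>(ys,zs). ys @ zs) (permutations_of_set u \<times> permutations_of_set (G - u))"
  proof (rule inj_onI, clarsimp)
    fix ys zs ys' zs'
    assume "ys \<in> permutations_of_set u" "ys' \<in> permutations_of_set u" "ys @ zs = ys' @ zs'"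
    moreover have "length ys = length ys'" using calculation
      by (metis length_finite_permutations_of_set)
    ultimately show "ys = ys' \<and> zs = zs'" by simp
  qed
  show ?thesis
    unfolding img using assms fu
    by (simp add: card_image[OF inj] card_cartesian_product card_Diff_subset)
qed

lemma sum_perm_prefix:
  fixes f :: "'a set \<Rightarrow> real"
  assumes "finite G" "k \<le> card G"
  shows "(\<Sum>xs\<in>permutations_of_set G. f (set (take k xs))) =
         fact k * fact (card G - k) * (\<Sum>u\<in>{u\<in>Pow G. card u = k}. f u)"
proof -
  have sub: "(\<lambda>xs. set (take k xs)) ` permutations_of_set G \<subseteq> {u\<in>Pow G. card u = k}"
  proof clarsimp
    fix xs assume xs: "xs \<in> permutations_of_set G"
    then have "set xs = G" "distinct xs" "length xs = card G"
      by (auto simp: permutations_of_set_def length_finite_permutations_of_set)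
    then show "set (take k xs) \<subseteq> G \<and> card (set (take k xs)) = k"
      using assms(2) by (auto simp: distinct_card dest: in_set_takeD)
  qed
  have "(\<Sum>xs\<in>permutations_of_set G. f (set (take k xs))) =
        (\<Sum>u\<in>{u\<in>Pow G. card u = k}. \<Sum>xs\<in>{xs. xs \<in> permutations_of_set G \<and> set (take k xs) = u}. f (set (take k xs)))"
    using assms by (intro sum.group[symmetric] sub) auto
  also have "\<dots> = (\<Sum>u\<in>{u\<in>Pow G. card u = k}. fact k * fact (card G - k) * f u)"
  proof (intro sum.cong refl)
    fix u assume u: "u \<in> {u\<in>Pow G. card u = k}"
    have "(\<Sum>xs\<in>{xs. xs \<in> permutations_of_set G \<and> set (take k xs) = u}. f (set (take k xs)))
        = (\<Sum>xs\<in>{xs \<in> permutations_of_set G. set (take k xs) = u}. f u)"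
      by (intro sum.cong) auto
    also have "\<dots> = fact k * fact (card G - k) * f u"
      using card_perm_prefix[OF assms(1), of u k] u by simp
    finally show "(\<Sum>xs\<in>{xs. xs \<in> permutations_of_set G \<and> set (take k xs) = u}. f (set (take k xs))) = fact k * fact (card G - k) * f u" .
  qed
  finally show ?thesis by (simp add: sum_distrib_left)
qed



lemma shift1: "(\<Sum>i=1..(n::nat)+1. g (i - 1)) = (\<Sum>k=0..n. (g k :: 'b::comm_monoid_add))"
proof -
  have "(\<Sum>i=Suc 0..Suc n. g (i - 1)) = (\<Sum>k=0..n. g (Suc k - 1))"
    by (rule sum.shift_bounds_cl_Suc_ivl)
  then show ?thesis by simp
qed

lemma inner_chain:
  fixes h :: "'a set \<Rightarrow> real"
  assumes "finite G"
  shows "(\<Sum>u\<in>Pow G. poisson_pmf r G u * h u) =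
     (\<Sum>xs\<in>permutations_of_set G. \<Sum>i=1..card G+1. h (set (take (i-1) xs)) * binom_pmf (i-1) (card G) r) / fact (card G)"
proof -
  define n where "n = card G"
  have "(\<Sum>xs\<in>permutations_of_set G. \<Sum>i=1..n+1. h (set (take (i-1) xs)) * binom_pmf (i-1) n r)
      = (\<Sum>xs\<in>permutations_of_set G. \<Sum>k=0..n. h (set (take k xs)) * binom_pmf k n r)"
  proof (rule sum.cong[OF refl])
    fix xs show "(\<Sum>i=1..n+1. h (set (take (i-1) xs)) * binom_pmf (i-1) n r) = (\<Sum>k=0..n. h (set (take k xs)) * binom_pmf k n r)"
      using shift1[where g="\<lambda>k. h (set (take k xs)) * binom_pmf k n r" and n=n] by simp
  qed
  also have "\<dots> = (\<Sum>k=0..n. \<Sum>xs\<in>permutations_of_set G. h (set (take k xs)) * binom_pmf k n r)"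
    by (rule sum.swap)
  also have "\<dots> = (\<Sum>k=0..n. binom_pmf k n r * (fact k * fact (n - k) * (\<Sum>u\<in>{u\<in>Pow G. card u = k}. h u)))"
  proof (intro sum.cong refl)
    fix k assume "k \<in> {0..n}"
    then have "k \<le> card G" by (simp add: n_def)
    then show "(\<Sum>xs\<in>permutations_of_set G. h (set (take k xs)) * binom_pmf k n r) =
      binom_pmf k n r * (fact k * fact (n - k) * (\<Sum>u\<in>{u\<in>Pow G. card u = k}. h u))"
      using sum_perm_prefix[OF assms, of k h] by (simp add: n_def flip: sum_distrib_right)
  qed
  also have "\<dots> = (\<Sum>k=0..n. \<Sum>u\<in>{u\<in>Pow G. card u = k}. fact n * (poisson_pmf r G u * h u))"
  proof (intro sum.cong refl)
    fix k assume "k \<in> {0..n}"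
    then have kn: "k \<le> n" by simp
    have "binom_pmf k n r * (fact k * fact (n - k)) = fact n * (r ^ k * (1 - r) ^ (n - k))"
      using binomial_fact_lemma[OF kn] unfolding binom_pmf_def
      by (metis (no_types, lifting) mult.assoc mult.commute of_nat_fact of_nat_mult)
    moreover have "poisson_pmf r G u = r ^ k * (1 - r) ^ (n - k)" if "u \<in> {u\<in>Pow G. card u = k}" for u
      using that by (simp add: poisson_pmf_def n_def)
    ultimately show "binom_pmf k n r * (fact k * fact (n - k) * (\<Sum>u\<in>{u\<in>Pow G. card u = k}. h u))
      = (\<Sum>u\<in>{u\<in>Pow G. card u = k}. fact n * (poisson_pmf r G u * h u))"
      by (simp add: sum_distrib_left mult.assoc[symmetric])
  qed
  also have "\<dots> = (\<Sum>u\<in>Pow G. fact n * (poisson_pmf r G u * h u))"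
  proof -
    have "(\<Sum>k\<in>{0..n}. \<Sum>u\<in>{u. u \<in> Pow G \<and> card u = k}. fact n * (poisson_pmf r G u * h u))
        = (\<Sum>u\<in>Pow G. fact n * (poisson_pmf r G u * h u))"
      using assms by (intro sum.group) (auto simp: n_def card_mono)
    then show ?thesis by simp
  qed
  finally show ?thesis by (simp add: n_def sum_distrib_left[symmetric])
qed

lemma mix_chain:
  assumes "finite c" "finite G" "c \<inter> G = {}"
  shows "mixture_density b r (c \<union> G) z = (\<Sum>w\<in>Pow c. poisson_pmf r c w *
     ((\<Sum>xs\<in>permutations_of_set G. \<Sum>i=1..card G+1. b (w \<union> set (take (i-1) xs)) z * binom_pmf (i-1) (card G) r) / fact (card G)))"
  unfolding mixture_density_def
  using mix_split[OF assms, of "\<lambda>y. b y z" r] inner_chain[OF assms(2), of r "\<lambda>u. b (_ \<union> u) z"]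
  by simp



lemma nbr_sym: "ins_rem_nbr y y' \<Longrightarrow> ins_rem_nbr y' y"
  unfolding ins_rem_nbr_def by (metis Diff_insert_absorb DiffD2 insert_Diff insertI1 singletonI)

lemma pow_sym: "(ins_rem_nbr ^^ n) y y' \<Longrightarrow> (ins_rem_nbr ^^ n) y' y"
proof (induction n arbitrary: y')
  case 0 then show ?case by simp
next
  case (Suc n)
  from Suc.prems obtain m where "(ins_rem_nbr ^^ n) y m" "ins_rem_nbr m y'" by (rule relpowp_Suc_E)
  then show ?case using Suc.IH nbr_sym by (metis relpowp_Suc_I2)
qed

lemma chain_ins: "distinct ys \<Longrightarrow> set ys \<inter> y = {} \<Longrightarrow> (ins_rem_nbr ^^ length ys) y (y \<union> set ys)"
proof (induction ys arbitrary: y)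
  case Nil then show ?case by simp
next
  case (Cons a ys)
  have "ins_rem_nbr y (insert a y)" using Cons.prems unfolding ins_rem_nbr_def by auto
  moreover have "(ins_rem_nbr ^^ length ys) (insert a y) (insert a y \<union> set ys)"
    using Cons.IH[of "insert a y"] Cons.prems by simp
  ultimately have "(ins_rem_nbr ^^ Suc (length ys)) y (insert a y \<union> set ys)" by (rule relpowp_Suc_I2)
  then show ?case by (metis Un_insert_left Un_insert_right length_Cons list.simps(15))
qed

lemma dist_le: "(ins_rem_nbr ^^ n) y y' \<Longrightarrow> dist_Y y y' \<le> n"
  unfolding dist_Y_def by (rule Least_le)

lemma chain_take:
  assumes "distinct xs" "set xs \<inter> w = {}" "a \<le> b" "b \<le> length xs"
  shows "(ins_rem_nbr ^^ (b - a)) (w \<union> set (take a xs)) (w \<union> set (take b xs))"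
proof -
  define ys where "ys = take (b - a) (drop a xs)"
  have tb: "take b xs = take a xs @ ys" unfolding ys_def using assms(3)
    by (metis le_add_diff_inverse take_add)
  have "distinct (take b xs)" using assms(1) by simp
  then have d: "distinct ys" "set ys \<inter> set (take a xs) = {}" using tb by auto
  have "set ys \<subseteq> set xs" using tb by (metis Un_upper2 set_append set_take_subset subset_trans)
  then have "set ys \<inter> (w \<union> set (take a xs)) = {}" using d assms(2) by auto
  moreover have "length ys = b - a" using assms unfolding ys_def by simp
  ultimately have "(ins_rem_nbr ^^ (b - a)) (w \<union> set (take a xs)) (w \<union> set (take a xs) \<union> set ys)"
    using chain_ins[OF d(1)] by metis
  then show ?thesis using tb by (simp add: Un_assoc)
qed

lemma dist_same:
  assumes "distinct xs" "set xs \<inter> w = {}" "t \<in> {1..length xs+1}" "u \<in> {1..length xs+1}"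
  shows "dist_Y (w \<union> set (take (t-1) xs)) (w \<union> set (take (u-1) xs)) \<le> nat \<bar>int t - int u\<bar>"
proof (cases "t \<le> u")
  case True
  then have "(ins_rem_nbr ^^ ((u-1) - (t-1))) (w \<union> set (take (t-1) xs)) (w \<union> set (take (u-1) xs))"
    using assms by (intro chain_take) auto
  then show ?thesis using True assms(3) by (auto dest!: dist_le)
next
  case False
  then have "(ins_rem_nbr ^^ ((t-1) - (u-1))) (w \<union> set (take (u-1) xs)) (w \<union> set (take (t-1) xs))"
    using assms by (intro chain_take) auto
  then have "(ins_rem_nbr ^^ ((t-1) - (u-1))) (w \<union> set (take (t-1) xs)) (w \<union> set (take (u-1) xs))"
    by (rule pow_sym)
  then show ?thesis using False assms(4) by (auto dest!: dist_le)
qed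

lemma dist_cross:
  assumes "distinct xs" "distinct ys" "set xs \<inter> w = {}" "set ys \<inter> w = {}" "set xs \<inter> set ys = {}"
    "a \<le> length xs" "b \<le> length ys"
  shows "dist_Y (w \<union> set (take a xs)) (w \<union> set (take b ys)) \<le> a + b"
proof -
  have 1: "(ins_rem_nbr ^^ a) (w \<union> set (take a xs)) w"
    using chain_take[OF assms(1,3), of 0 a] assms(6) by (auto intro: pow_sym)
  have 2: "(ins_rem_nbr ^^ b) w (w \<union> set (take b ys))"
    using chain_take[OF assms(2,4), of 0 b] assms(7) by auto
  have "(ins_rem_nbr ^^ (a + b)) (w \<union> set (take a xs)) (w \<union> set (take b ys))"
    unfolding relpowp_add using 1 2 by blast
  then show ?thesis by (rule dist_le)
qed



definition goodF :: "(real \<Rightarrow> real \<Rightarrow> ennreal) \<Rightarrow> bool" where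
 "goodF F \<longleftrightarrow> (\<forall>(M::'b::euclidean_space measure) p q. p \<in> borel_measurable M \<longrightarrow> q \<in> borel_measurable M \<longrightarrow>
       (\<lambda>z. F (p z) (q z)) \<in> borel_measurable M) \<and> F 0 0 = 0 \<and>
   (\<forall>c p q. 0 \<le> c \<longrightarrow> 0 \<le> p \<longrightarrow> 0 \<le> q \<longrightarrow> F (c*p) (c*q) = ennreal c * F p q) \<and>
   (\<forall>p1 q1 p2 q2. 0 \<le> p1 \<longrightarrow> 0 \<le> q1 \<longrightarrow> 0 \<le> p2 \<longrightarrow> 0 \<le> q2 \<longrightarrow>
        F (p1+p2) (q1+q2) \<le> F p1 q1 + F p2 q2)"

lemma goodF_sum:
  assumes "goodF TYPE('b::euclidean_space) F" "finite I" "\<And>i. 0 \<le> P i" "\<And>i. 0 \<le> Q i"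
  shows "F (\<Sum>i\<in>I. P i) (\<Sum>i\<in>I. Q i) \<le> (\<Sum>i\<in>I. F (P i) (Q i))"
  using assms(2)
proof (induction I rule: finite_induct)
  case empty then show ?case using assms(1) by (simp add: goodF_def)
next
  case (insert a I)
  have "F (P a + sum P I) (Q a + sum Q I) \<le> F (P a) (Q a) + F (sum P I) (sum Q I)"
    using assms(1,3,4) by (simp add: goodF_def sum_nonneg)
  also have "\<dots> \<le> F (P a) (Q a) + (\<Sum>i\<in>I. F (P i) (Q i))"
    using insert.IH by (rule add_left_mono)
  finally show ?case using insert by simp
qed

lemma goodF_D:
  assumes "goodF TYPE('b::euclidean_space) F"
  shows "\<And>(M::'b measure) p q. p \<in> borel_measurable M \<Longrightarrow> q \<in> borel_measurable M \<Longrightarrow> (\<lambda>z. F (p z) (q z)) \<in> borel_measurable M"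
    and "F 0 0 = 0"
    and "\<And>c p q. 0 \<le> c \<Longrightarrow> 0 \<le> p \<Longrightarrow> 0 \<le> q \<Longrightarrow> F (c*p) (c*q) = ennreal c * F p q"
    and "\<And>p1 q1 p2 q2. 0 \<le> p1 \<Longrightarrow> 0 \<le> q1 \<Longrightarrow> 0 \<le> p2 \<Longrightarrow> 0 \<le> q2 \<Longrightarrow> F (p1+p2) (q1+q2) \<le> F p1 q1 + F p2 q2"
  using assms unfolding goodF_def by simp_all

lemma goodF_integral:
  fixes P Q :: "'i \<Rightarrow> 'b::euclidean_space \<Rightarrow> real"
  assumes F: "goodF TYPE('b) F" and I: "finite I" and c: "\<And>i. 0 \<le> c i"
    and P: "\<And>i z. 0 \<le> P i z" and Q: "\<And>i z. 0 \<le> Q i z"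
    and Pm: "\<And>i. P i \<in> borel_measurable lborel" and Qm: "\<And>i. Q i \<in> borel_measurable lborel"
  shows "(\<integral>\<^sup>+ z. F (\<Sum>i\<in>I. c i * P i z) (\<Sum>i\<in>I. c i * Q i z) \<partial>lborel)
     \<le> (\<Sum>i\<in>I. ennreal (c i) * (\<integral>\<^sup>+ z. F (P i z) (Q i z) \<partial>lborel))"
proof -
  have meas: "(\<lambda>z. F (P i z) (Q i z)) \<in> borel_measurable lborel" for i
    by (rule goodF_D(1)[OF F Pm Qm])
  have "(\<integral>\<^sup>+ z. F (\<Sum>i\<in>I. c i * P i z) (\<Sum>i\<in>I. c i * Q i z) \<partial>lborel)
     \<le> (\<integral>\<^sup>+ z. (\<Sum>i\<in>I. ennreal (c i) * F (P i z) (Q i z)) \<partial>lborel)"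
  proof (rule nn_integral_mono)
    fix z
    have "F (\<Sum>i\<in>I. c i * P i z) (\<Sum>i\<in>I. c i * Q i z) \<le> (\<Sum>i\<in>I. F (c i * P i z) (c i * Q i z))"
      by (rule goodF_sum[OF F I]) (auto intro: mult_nonneg_nonneg c P Q)
    also have "\<dots> = (\<Sum>i\<in>I. ennreal (c i) * F (P i z) (Q i z))"
      by (rule sum.cong[OF refl], rule goodF_D(3)[OF F c P Q])
    finally show "F (\<Sum>i\<in>I. c i * P i z) (\<Sum>i\<in>I. c i * Q i z) \<le> (\<Sum>i\<in>I. ennreal (c i) * F (P i z) (Q i z))" .
  qed
  also have "\<dots> = (\<Sum>i\<in>I. (\<integral>\<^sup>+ z. ennreal (c i) * F (P i z) (Q i z) \<partial>lborel))"
    using meas by (intro nn_integral_sum) auto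
  also have "\<dots> = (\<Sum>i\<in>I. ennreal (c i) * (\<integral>\<^sup>+ z. F (P i z) (Q i z) \<partial>lborel))"
    using meas by (intro sum.cong refl nn_integral_cmult) auto
  finally show ?thesis .
qed

lemma goodF_hockey:
  shows "goodF TYPE('b::euclidean_space) (\<lambda>p q. ennreal (max (p - \<alpha> * q) 0))"
  unfolding goodF_def
proof (intro conjI allI impI)
  fix M :: "'b measure" and p q :: "'b \<Rightarrow> real"
  assume "p \<in> borel_measurable M" "q \<in> borel_measurable M"
  then show "(\<lambda>z. ennreal (max (p z - \<alpha> * q z) 0)) \<in> borel_measurable M" by measurable
next
  fix c p q :: real assume "0 \<le> c"
  moreover have "max (c * p - \<alpha> * (c * q)) 0 = c * max (p - \<alpha> * q) 0" using calculation
  proof -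
    have e: "c * p - \<alpha> * (c * q) = c * (p - \<alpha> * q)" by (simp add: algebra_simps)
    show ?thesis unfolding e
      using \<open>0 \<le> c\<close> mult_nonneg_nonneg[of c "p - \<alpha> * q"] mult_nonneg_nonpos[of c "p - \<alpha> * q"]
      by (cases "0 \<le> p - \<alpha> * q") (auto simp: max_def mult_le_0_iff)
  qed
  ultimately show "ennreal (max (c * p - \<alpha> * (c * q)) 0) = ennreal c * ennreal (max (p - \<alpha> * q) 0)"
    by (simp add: ennreal_mult)
next
  fix p1 q1 p2 q2 :: real
  have "max (p1 + p2 - \<alpha> * (q1 + q2)) 0 \<le> max (p1 - \<alpha> * q1) 0 + max (p2 - \<alpha> * q2) 0"
    by (simp add: algebra_simps)
  then show "ennreal (max (p1 + p2 - \<alpha> * (q1 + q2)) 0) \<le> ennreal (max (p1 - \<alpha> * q1) 0) + ennreal (max (p2 - \<alpha> * q2) 0)"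
    by (simp add: ennreal_plus[symmetric] ennreal_leI del: ennreal_plus)
qed simp



lemma persp: "0 \<le> (p::real) \<Longrightarrow> 0 < (q::real) \<Longrightarrow> q * (p / q) powr a = p powr a * q powr (1 - a)"
proof -
  assume q: "0 < q"
  have "q powr (1 - a) = q / q powr a" using q powr_diff[of q 1 a] by simp
  moreover have "(p / q) powr a = p powr a / q powr a" by (rule powr_divide)
  ultimately show ?thesis by simp
qed

lemma renyi_real_sub:
  fixes p1 p2 q1 q2 \<alpha> :: real
  assumes "1 < \<alpha>" "0 \<le> p1" "0 \<le> p2" "0 < q1" "0 < q2"
  shows "(p1+p2) powr \<alpha> * (q1+q2) powr (1-\<alpha>) \<le> p1 powr \<alpha> * q1 powr (1-\<alpha>) + p2 powr \<alpha> * q2 powr (1-\<alpha>)"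
proof (cases "p1 = 0 \<or> p2 = 0")
  case True
  then show ?thesis
  proof
    assume "p1 = 0"
    have "(q1+q2) powr (1-\<alpha>) \<le> q2 powr (1-\<alpha>)" using assms by (intro powr_mono2') auto
    then show ?thesis using \<open>p1 = 0\<close> assms by (simp add: mult_left_mono)
  next
    assume "p2 = 0"
    have "(q1+q2) powr (1-\<alpha>) \<le> q1 powr (1-\<alpha>)" using assms by (intro powr_mono2') auto
    then show ?thesis using \<open>p2 = 0\<close> assms by (simp add: mult_left_mono)
  qed
next
  case False
  then have p: "0 < p1" "0 < p2" using assms by auto
  define s where "s = q1 + q2"
  have s: "0 < s" using assms by (simp add: s_def)
  define t where "t = q2 / s"
  have t: "0 \<le> t" "t \<le> 1" using assms s by (auto simp: t_def s_def)
  have t1: "1 - t = q1 / s" using s by (simp add: t_def s_def field_simps)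
  have cv: "((1 - t) *\<^sub>R (p1/q1) + t *\<^sub>R (p2/q2)) powr \<alpha> \<le> (1 - t) * (p1/q1) powr \<alpha> + t * (p2/q2) powr \<alpha>"
    using convex_onD[OF powr_convex[of \<alpha>] t, of "p1/q1" "p2/q2"] assms p by simp
  have m: "(1 - t) *\<^sub>R (p1/q1) + t *\<^sub>R (p2/q2) = (p1+p2)/s"
    unfolding t1 using assms s by (simp add: t_def field_simps)
  have "s * ((p1+p2)/s) powr \<alpha> \<le> s * ((1 - t) * (p1/q1) powr \<alpha> + t * (p2/q2) powr \<alpha>)"
    using cv m s by (simp add: mult_left_mono)
  also have "\<dots> = q1 * (p1/q1) powr \<alpha> + q2 * (p2/q2) powr \<alpha>"
    unfolding t1 using s by (simp add: t_def field_simps)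
  finally show ?thesis
    using persp[of "p1+p2" s \<alpha>] persp[of p1 q1 \<alpha>] persp[of p2 q2 \<alpha>] assms s by (simp add: s_def)
qed

lemma goodF_renyi:
  assumes "1 < \<alpha>"
  shows "goodF TYPE('b::euclidean_space) (renyi_integrand \<alpha>)"
  unfolding goodF_def
proof (intro conjI allI impI)
  fix M :: "'b measure" and p q :: "'b \<Rightarrow> real"
  assume "p \<in> borel_measurable M" "q \<in> borel_measurable M"
  then show "(\<lambda>z. renyi_integrand \<alpha> (p z) (q z)) \<in> borel_measurable M"
    unfolding renyi_integrand_def by measurable
next
  show "renyi_integrand \<alpha> 0 0 = 0" by (simp add: renyi_integrand_def)
next
  fix c p q :: real assume c: "0 \<le> c" and p: "0 \<le> p" and q: "0 \<le> q"
  show "renyi_integrand \<alpha> (c * p) (c * q) = ennreal c * renyi_integrand \<alpha> p q"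
  proof (cases "c = 0")
    case True then show ?thesis by (simp add: renyi_integrand_def)
  next
    case False
    then have c0: "0 < c" using c by simp
    have "(c * p) powr \<alpha> * (c * q) powr (1 - \<alpha>) = c * (p powr \<alpha> * q powr (1 - \<alpha>))"
    proof -
      have "(c * p) powr \<alpha> * (c * q) powr (1 - \<alpha>) = (c powr \<alpha> * c powr (1 - \<alpha>)) * (p powr \<alpha> * q powr (1 - \<alpha>))"
        by (simp add: powr_mult)
      also have "c powr \<alpha> * c powr (1 - \<alpha>) = c" using c0 by (simp add: powr_add[symmetric])
      finally show ?thesis .
    qed
    then show ?thesis using c0 by (simp add: renyi_integrand_def ennreal_mult ennreal_mult_top)
  qed
next
  fix p1 q1 p2 q2 :: real
  assume h: "0 \<le> p1" "0 \<le> q1" "0 \<le> p2" "0 \<le> q2"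
  show "renyi_integrand \<alpha> (p1 + p2) (q1 + q2) \<le> renyi_integrand \<alpha> p1 q1 + renyi_integrand \<alpha> p2 q2"
  proof (cases "q1 = 0 \<or> q2 = 0")
    case True
    then show ?thesis using h by (auto simp: renyi_integrand_def)
  next
    case False
    then have "0 < q1" "0 < q2" using h by auto
    then show ?thesis using renyi_real_sub[OF assms h(1,3)] h
      by (auto simp: renyi_integrand_def ennreal_plus[symmetric] ennreal_leI simp del: ennreal_plus)
  qed
qed



lemma binom_nonneg: "0 \<le> r \<Longrightarrow> r \<le> 1 \<Longrightarrow> 0 \<le> binom_pmf k n r"
  by (simp add: binom_pmf_def)

lemma poisson_nonneg: "0 \<le> r \<Longrightarrow> r \<le> 1 \<Longrightarrow> 0 \<le> poisson_pmf r A w"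
  by (simp add: poisson_pmf_def)

lemma main_generic:
  fixes b :: "('a::finite) set \<Rightarrow> ('b::euclidean_space) \<Rightarrow> real"
    and r :: real and Kp Km :: nat and x x' :: "'a set"
    and Psi :: "('b \<Rightarrow> real) \<Rightarrow> ('b \<Rightarrow> real) \<Rightarrow> ennreal"
  assumes r: "0 \<le> r" "r \<le> 1"
    and dens_meas: "\<And>y. b y \<in> borel_measurable lborel"
    and dens_nonneg: "\<And>y z. 0 \<le> b y z"
    and F: "goodF TYPE('b) F"
    and PsiF: "Psi = (\<lambda>p q. \<integral>\<^sup>+ z. F (p z) (q z) \<partial>lborel)"
    and nbr: "dataset_nbr Kp Km x x'"
  shows "Psi (mixture_density b r x) (mixture_density b r x') \<le>
    (SUP yy \<in> {(y1 :: nat \<Rightarrow> 'a set, y2 :: nat \<Rightarrow> 'a set).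
               (\<forall>t\<in>{1..Km+1}. \<forall>u\<in>{1..Km+1}. dist_Y (y1 t) (y1 u) \<le> nat \<bar>int t - int u\<bar>) \<and>
               (\<forall>t\<in>{1..Kp+1}. \<forall>u\<in>{1..Kp+1}. dist_Y (y2 t) (y2 u) \<le> nat \<bar>int t - int u\<bar>) \<and>
               (\<forall>t\<in>{1..Km+1}. \<forall>u\<in>{1..Kp+1}. dist_Y (y1 t) (y2 u) \<le> (t - 1) + (u - 1))}.
       Psi (\<lambda>z. \<Sum>i=1..Km+1. b (fst yy i) z * binom_pmf (i - 1) Km r)
           (\<lambda>z. \<Sum>j=1..Kp+1. b (snd yy j) z * binom_pmf (j - 1) Kp r))"
  (is "_ \<le> (SUP yy \<in> ?S. ?G yy)")
proof -
  obtain gm gp where g: "gm \<subseteq> x" "card gm = Km" "gp \<inter> x = {}" "card gp = Kp" "x' = (x - gm) \<union> gp"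
    using nbr unfolding dataset_nbr_def by blast
  define c where "c = x - gm"
  have xc: "x = c \<union> gm" "x' = c \<union> gp" using g by (auto simp: c_def)
  have disj: "c \<inter> gm = {}" "c \<inter> gp = {}" "gm \<inter> gp = {}" using g by (auto simp: c_def)
  define Pm where "Pm = (\<lambda>w xs z. \<Sum>i=1..Km+1. b (w \<union> set (take (i-1) xs)) z * binom_pmf (i-1) Km r)"
  define Qm where "Qm = (\<lambda>w ys z. \<Sum>j=1..Kp+1. b (w \<union> set (take (j-1) ys)) z * binom_pmf (j-1) Kp r)"
  define I where "I = Pow c \<times> (permutations_of_set gm \<times> permutations_of_set gp)"
  define wt where "wt = (\<lambda>(k::'a set \<times> 'a list \<times> 'a list). poisson_pmf r c (fst k) / (fact Km * fact Kp))"
  define P where "P = (\<lambda>k::'a set \<times> 'a list \<times> 'a list. Pm (fst k) (fst (snd k)))"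
  define Q where "Q = (\<lambda>k::'a set \<times> 'a list \<times> 'a list. Qm (fst k) (snd (snd k)))"
  have finI: "finite I" unfolding I_def by simp
  have mx: "mixture_density b r x = (\<lambda>z. \<Sum>k\<in>I. wt k * P k z)"
  proof
    fix z
    have "mixture_density b r x z = (\<Sum>w\<in>Pow c. poisson_pmf r c w * ((\<Sum>xs\<in>permutations_of_set gm. Pm w xs z) / fact Km))"
      unfolding xc(1) Pm_def using mix_chain[of c gm b r z] disj g(2) by simp
    also have "\<dots> = (\<Sum>k\<in>I. wt k * P k z)"
    proof -
      have "(\<Sum>k\<in>I. wt k * P k z) = (\<Sum>w\<in>Pow c. \<Sum>xs\<in>permutations_of_set gm. \<Sum>ys\<in>permutations_of_set gp. poisson_pmf r c w * Pm w xs z / (fact Km * fact Kp))"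
        unfolding I_def wt_def P_def by (simp add: sum.cartesian_product')
      also have "\<dots> = (\<Sum>w\<in>Pow c. poisson_pmf r c w * ((\<Sum>xs\<in>permutations_of_set gm. Pm w xs z) / fact Km))"
        by (simp add: g(2,4) sum_distrib_left sum_divide_distrib )
      finally show ?thesis by simp
    qed
    finally show "mixture_density b r x z = (\<Sum>k\<in>I. wt k * P k z)" .
  qed
  have mx': "mixture_density b r x' = (\<lambda>z. \<Sum>k\<in>I. wt k * Q k z)"
  proof
    fix z
    have "mixture_density b r x' z = (\<Sum>w\<in>Pow c. poisson_pmf r c w * ((\<Sum>ys\<in>permutations_of_set gp. Qm w ys z) / fact Kp))"
      unfolding xc(2) Qm_def using mix_chain[of c gp b r z] disj g(4) by simp
    also have "\<dots> = (\<Sum>k\<in>I. wt k * Q k z)"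
    proof -
      have "(\<Sum>k\<in>I. wt k * Q k z) = (\<Sum>w\<in>Pow c. \<Sum>xs\<in>permutations_of_set gm. \<Sum>ys\<in>permutations_of_set gp. poisson_pmf r c w * Qm w ys z / (fact Km * fact Kp))"
        unfolding I_def wt_def Q_def by (simp add: sum.cartesian_product')
      also have "\<dots> = (\<Sum>w\<in>Pow c. poisson_pmf r c w * ((\<Sum>ys\<in>permutations_of_set gp. Qm w ys z) / fact Kp))"
        by (simp add: g(2,4) sum_distrib_left sum_divide_distrib sum.swap[of _ "permutations_of_set gm"])
      finally show ?thesis by simp
    qed
    finally show "mixture_density b r x' z = (\<Sum>k\<in>I. wt k * Q k z)" .
  qed
  have wsum: "(\<Sum>k\<in>I. wt k) = 1"
  proof -
    have "(\<Sum>k\<in>I. wt k) = (\<Sum>w\<in>Pow c. poisson_pmf r c w)"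
    proof -
      have "(\<Sum>k\<in>I. wt k) = (\<Sum>w\<in>Pow c. \<Sum>xs\<in>permutations_of_set gm. \<Sum>ys\<in>permutations_of_set gp. poisson_pmf r c w / (fact Km * fact Kp))"
        unfolding I_def wt_def by (simp add: sum.cartesian_product' mult.assoc)
      also have "\<dots> = (\<Sum>w\<in>Pow c. poisson_pmf r c w)"
        unfolding g(2)[symmetric] g(4)[symmetric] by simp
      finally show ?thesis .
    qed
    then show ?thesis using poisson_sum1[of c r] by simp
  qed
  have wt0: "0 \<le> wt k" for k unfolding wt_def using r by (simp add: poisson_nonneg case_prod_unfold)
  have P0: "0 \<le> P k z" for k z unfolding P_def Pm_def
    using r dens_nonneg by (intro sum_nonneg mult_nonneg_nonneg binom_nonneg) auto
  have Q0: "0 \<le> Q k z" for k z unfolding Q_def Qm_def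
    using r dens_nonneg by (intro sum_nonneg mult_nonneg_nonneg binom_nonneg) auto
  have Pmeas: "P k \<in> borel_measurable lborel" for k unfolding P_def Pm_def
    using dens_meas by measurable
  have Qmeas: "Q k \<in> borel_measurable lborel" for k unfolding Q_def Qm_def
    using dens_meas by measurable
  have upper: "Psi (P k) (Q k) \<le> (SUP yy \<in> ?S. ?G yy)" if k: "k \<in> I" for k
  proof -
    obtain w xs ys where kk: "k = (w, xs, ys)" by (cases k) auto
    have h: "w \<subseteq> c" "set xs = gm" "distinct xs" "set ys = gp" "distinct ys"
      using k unfolding kk I_def by (auto simp: permutations_of_set_def)
    have lx: "length xs = Km" using h g distinct_card by metis
    have ly: "length ys = Kp" using h g distinct_card by metis
    have dxw: "set xs \<inter> w = {}" "set ys \<inter> w = {}" "set xs \<inter> set ys = {}"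
      using h disj by auto
    define yy where "yy = ((\<lambda>i. w \<union> set (take (i-1) xs)), (\<lambda>j. w \<union> set (take (j-1) ys)))"
    have mem: "yy \<in> ?S"
      unfolding yy_def mem_Collect_eq case_prod_conv
    proof (intro conjI ballI)
      fix t u assume "t \<in> {1..Km+1}" "u \<in> {1..Km+1}"
      then show "dist_Y (w \<union> set (take (t-1) xs)) (w \<union> set (take (u-1) xs)) \<le> nat \<bar>int t - int u\<bar>"
        using dist_same[OF h(3) dxw(1)] lx by simp
    next
      fix t u assume "t \<in> {1..Kp+1}" "u \<in> {1..Kp+1}"
      then show "dist_Y (w \<union> set (take (t-1) ys)) (w \<union> set (take (u-1) ys)) \<le> nat \<bar>int t - int u\<bar>"
        using dist_same[OF h(5) dxw(2)] ly by simp
    next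
      fix t u assume tu: "t \<in> {1..Km+1}" "u \<in> {1..Kp+1}"
      show "dist_Y (w \<union> set (take (t-1) xs)) (w \<union> set (take (u-1) ys)) \<le> (t - 1) + (u - 1)"
        by (rule dist_cross[OF h(3) h(5) dxw]) (use tu lx ly in auto)
    qed
    have eq: "Psi (P k) (Q k) = ?G yy"
      unfolding yy_def P_def Q_def Pm_def Qm_def kk by simp
    show ?thesis unfolding eq by (rule SUP_upper[OF mem])
  qed
  have "Psi (mixture_density b r x) (mixture_density b r x') =
        (\<integral>\<^sup>+ z. F (\<Sum>k\<in>I. wt k * P k z) (\<Sum>k\<in>I. wt k * Q k z) \<partial>lborel)"
    unfolding mx mx' PsiF by simp
  also have "\<dots> \<le> (\<Sum>k\<in>I. ennreal (wt k) * (\<integral>\<^sup>+ z. F (P k z) (Q k z) \<partial>lborel))"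
    by (rule goodF_integral[OF F finI wt0 P0 Q0 Pmeas Qmeas])
  also have "\<dots> = (\<Sum>k\<in>I. ennreal (wt k) * Psi (P k) (Q k))"
    unfolding PsiF by simp
  also have "\<dots> \<le> (\<Sum>k\<in>I. ennreal (wt k) * (SUP yy \<in> ?S. ?G yy))"
    using upper by (intro sum_mono mult_left_mono) auto
  also have "\<dots> = ennreal (\<Sum>k\<in>I. wt k) * (SUP yy \<in> ?S. ?G yy)"
    using wt0 by (simp flip: sum_distrib_right)
  also have "\<dots> = (SUP yy \<in> ?S. ?G yy)" using wsum by simp
  finally show ?thesis .
qed


theorem theorem3p7:
  fixes b :: "('a::finite) set \<Rightarrow> ('b::euclidean_space) \<Rightarrow> real"
    and r \<alpha> :: real and Kp Km :: nat and x x' :: "'a set"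
    and Psi :: "('b \<Rightarrow> real) \<Rightarrow> ('b \<Rightarrow> real) \<Rightarrow> ennreal"
  assumes r: "0 \<le> r" "r \<le> 1"
    and dens_meas: "\<And>y. b y \<in> borel_measurable lborel"
    and dens_nonneg: "\<And>y z. 0 \<le> b y z"
    and dens_int: "\<And>y. (\<integral>\<^sup>+ z. ennreal (b y z) \<partial>lborel) = 1"
    and Psi: "(Psi = hockey_stick \<alpha> \<and> 0 \<le> \<alpha>) \<or> (Psi = renyi_moment \<alpha> \<and> 1 < \<alpha>)"
    and nbr: "dataset_nbr Kp Km x x'"
  shows "Psi (mixture_density b r x) (mixture_density b r x') \<le>
    (SUP yy \<in> {(y1 :: nat \<Rightarrow> 'a set, y2 :: nat \<Rightarrow> 'a set).
               (\<forall>t\<in>{1..Km+1}. \<forall>u\<in>{1..Km+1}. dist_Y (y1 t) (y1 u) \<le> nat \<bar>int t - int u\<bar>) \<and>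
               (\<forall>t\<in>{1..Kp+1}. \<forall>u\<in>{1..Kp+1}. dist_Y (y2 t) (y2 u) \<le> nat \<bar>int t - int u\<bar>) \<and>
               (\<forall>t\<in>{1..Km+1}. \<forall>u\<in>{1..Kp+1}. dist_Y (y1 t) (y2 u) \<le> (t - 1) + (u - 1))}.
       Psi (\<lambda>z. \<Sum>i=1..Km+1. b (fst yy i) z * binom_pmf (i - 1) Km r)
           (\<lambda>z. \<Sum>j=1..Kp+1. b (snd yy j) z * binom_pmf (j - 1) Kp r))"
proof -
  from Psi show ?thesis
  proof
    assume h: "Psi = hockey_stick \<alpha> \<and> 0 \<le> \<alpha>"
    show ?thesis
      by (rule main_generic[OF r dens_meas dens_nonneg goodF_hockey[of \<alpha>] _ nbr])
         (simp add: h hockey_stick_def)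
  next
    assume h: "Psi = renyi_moment \<alpha> \<and> 1 < \<alpha>"
    show ?thesis
      by (rule main_generic[OF r dens_meas dens_nonneg goodF_renyi[of \<alpha>] _ nbr])
         (use h in \<open>simp_all add: renyi_moment_def\<close>)
  qed
qed

end
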